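(* Let $r\in\mathbb{N}_0$, $m=r+1$, and let $x_0\le x_1\le\dots\le x_m$ be real numbers with $x_0<x_m$. If $f\in C^{(r)}[x_0,x_m]$, then \[ \big|[x_0,\dots,x_m;f]\big|\le c\,\Lambda_r(x_0,\dots,x_m;\omega_1), \] where $\omega_1(t):=\omega_1(f^{(r)},t;[x_0,x_m])$ and the constant $c$ depends only on $m$.
   Context: Modulus of smoothness: for $g\in C[a,b]$, $k\in\mathbb{N}$, $\Delta^k_u(g,x;[a,b]):=\sum_{i=0}^k(-1)^i\binom ki g(x+(k/2-i)u)$ if $x\pm(k/2)u\in[a,b]$, else $0$; $\omega_k(g,t;[a,b]):=\sup_{0<u\le t}\|\Delta^k_u(g,\cdot;[a,b])\|_{C[a,b]}$. Divided differences with repeated points: $[x_0;f]:=f(x_0)$; if $x_0=\dots=x_m$, $[x_0,\dots,x_m;f]:=f^{(m)}(x_0)/m!$; otherwise for $j^*$ with $x_{j^*}\ne x_0$, $[x_0,\dots,x_m;f]:=\frac{[x_1,\dots,x_m;f]-[x_0,\dots,x_{j^*-1},x_{j^*+1},\dots,x_m;f]}{x_{j^*}-x_0}$. For ordered $y_0\le\dots\le y_n$: $\mathcal{Q}_{n,r}:=\{(p,q):0\le p,q\le n,\ q-p\ge r+1\}$, $y_{-1}:=y_0-(y_n-y_0)$, $y_{n+1}:=y_n+(y_n-y_0)$, $d(p,q):=\min\{y_{q+1}-y_p,y_q-y_{p-1}\}$, and for nondecreasing $\varphi\in C[0,\infty]$ with $\varphi(0)=0$, $\Lambda_{p,q,r}(y_0,\dots,y_n;\varphi):=\frac{\int_{y_q-y_p}^{d(p,q)}u^{p+r-q-1}\varphi(u)du}{\prod_{i=0}^{p-1}(y_q-y_i)\prod_{i=q+1}^{n}(y_i-y_p)}$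 (empty products $=1$), $\Lambda_r(y_0,\dots,y_n;\varphi):=\max_{(p,q)\in\mathcal{Q}_{n,r}}\Lambda_{p,q,r}(y_0,\dots,y_n;\varphi)$. *)

theory Defs
  imports "HOL-Analysis.Analysis"
begin

definition Delta :: "nat \<Rightarrow> real \<Rightarrow> (real \<Rightarrow> real) \<Rightarrow> real \<Rightarrow> real \<Rightarrow> real \<Rightarrow> real" where
  "Delta k u g a b x =
     (if a \<le> x - (real k / 2) * u \<and> x + (real k / 2) * u \<le> b
      then (\<Sum>i=0..k. (-1) ^ i * real (k choose i) * g (x + (real k / 2 - real i) * u))
      else 0)"

text \<open>Sup over 0<u<=t of the sup norm on [a,b]; the value 0 is included so that omega(0)=0.\<close>
definition omega :: "nat \<Rightarrow> (real \<Rightarrow> real) \<Rightarrow> real \<Rightarrow> real \<Rightarrow> real \<Rightarrow> real" where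
  "omega k g t a b =
     Sup (insert 0 {\<bar>Delta k u g a b x\<bar> | u x. 0 < u \<and> u \<le> t \<and> x \<in> {a..b}})"

text \<open>Divided difference with repeated points. D k is the k-th derivative of f
  (D 0 = f). If not all points coincide, j* is the first index with x_j* \<noteq> x_0.\<close>
function divdiff :: "(nat \<Rightarrow> real \<Rightarrow> real) \<Rightarrow> real list \<Rightarrow> real" where
  "divdiff D [] = 0"
| "divdiff D (x0 # xs) =
     (if \<forall>y\<in>set xs. y = x0 then D (length xs) x0 / fact (length xs)
      else (let y = hd (filter (\<lambda>y. y \<noteq> x0) xs) in
            (divdiff D xs - divdiff D (x0 # remove1 y xs)) / (y - x0)))"
  by pat_completeness auto
termination
proof (relation "Wellfounded.measure (\<lambda>(D, xs). length xs)", goal_cases)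
  case 1 show ?case by simp
next
  case 2 show ?case by simp
next
  case (3 D x0 xs y)
  then have ne: "filter (\<lambda>y. y \<noteq> x0) xs \<noteq> []" by (auto simp: filter_empty_conv)
  have "y \<in> set (filter (\<lambda>y. y \<noteq> x0) xs)" using 3 ne hd_in_set by metis
  then have "y \<in> set xs" by simp
  then have "length xs > 0" by (metis length_pos_if_in_set)
  then show ?case using `y \<in> set xs` by (simp add: length_remove1)
qed

definition yext :: "(nat \<Rightarrow> real) \<Rightarrow> nat \<Rightarrow> int \<Rightarrow> real" where
  "yext y n i = (if i < 0 then y 0 - (y n - y 0)
                 else if i > int n then y n + (y n - y 0) else y (nat i))"

definition dpq :: "(nat \<Rightarrow> real) \<Rightarrow> nat \<Rightarrow> nat \<Rightarrow> nat \<Rightarrow> real" where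
  "dpq y n p q = min (yext y n (int q + 1) - y p) (y q - yext y n (int p - 1))"

definition Lambda_pqr :: "nat \<Rightarrow> nat \<Rightarrow> nat \<Rightarrow> (nat \<Rightarrow> real) \<Rightarrow> nat \<Rightarrow> (real \<Rightarrow> real) \<Rightarrow> real" where
  "Lambda_pqr p q r y n \<phi> =
     integral {y q - y p .. dpq y n p q} (\<lambda>u. u powi (int p + int r - int q - 1) * \<phi> u)
     / ((\<Prod>i<p. (y q - y i)) * (\<Prod>i\<in>{q+1..n}. (y i - y p)))"

definition Lambda :: "nat \<Rightarrow> (nat \<Rightarrow> real) \<Rightarrow> nat \<Rightarrow> (real \<Rightarrow> real) \<Rightarrow> real" where
  "Lambda r y n \<phi> = Max {Lambda_pqr p q r y n \<phi> | p q. p \<le> n \<and> q \<le> n \<and> p + r + 1 \<le> q}"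

end

theory Submission
  imports Defs "HOL-Computational_Algebra.Polynomial"
begin

lemma dd_step:
  assumes "\<not> (\<forall>y\<in>set xs. y = x0)" "y = hd (filter (\<lambda>y. y \<noteq> x0) xs)"
  shows "divdiff D (x0 # xs) = (divdiff D xs - divdiff D (x0 # remove1 y xs)) / (y - x0)"
  apply (rule trans[OF divdiff.simps(2)])
  apply (subst if_not_P[OF assms(1)])
  unfolding Let_def assms(2) by (rule refl)

declare divdiff.simps(2)[simp del]

lemma dd_all:
  assumes "\<forall>y\<in>set xs. y = x0"
  shows "divdiff D (x0 # xs) = D (length xs) x0 / fact (length xs)"
  using assms by (simp add: divdiff.simps(2))

lemma dd_lin:
  "divdiff (\<lambda>j t. a * D j t + b * E j t) xs = a * divdiff D xs + b * divdiff E xs"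
proof (induction D xs rule: divdiff.induct)
  case (1 D) then show ?case by simp
next
  case (2 D x0 xs)
  show ?case
  proof (cases "\<forall>y\<in>set xs. y = x0")
    case True then show ?thesis by (simp add: dd_all add_divide_distrib)
  next
    case False
    define y where "y = hd (filter (\<lambda>y. y \<noteq> x0) xs)"
    have "divdiff (\<lambda>j t. a * D j t + b * E j t) (x0 # xs) =
      (divdiff (\<lambda>j t. a * D j t + b * E j t) xs - divdiff (\<lambda>j t. a * D j t + b * E j t) (x0 # remove1 y xs)) / (y - x0)"
      using False by (simp only: dd_step[OF False y_def])
    also have "\<dots> = ((a * divdiff D xs + b * divdiff E xs) - (a * divdiff D (x0 # remove1 y xs) + b * divdiff E (x0 # remove1 y xs))) / (y - x0)"
      using 2 False y_def by simp
    also have "\<dots> = a * ((divdiff D xs - divdiff D (x0 # remove1 y xs)) / (y - x0)) + b * ((divdiff E xs - divdiff E (x0 # remove1 y xs)) / (y - x0))"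
      by (simp add: diff_divide_distrib add_divide_distrib right_diff_distrib)
    also have "\<dots> = a * divdiff D (x0 # xs) + b * divdiff E (x0 # xs)"
      using False by (simp only: dd_step[OF False y_def])
    finally show ?thesis .
  qed
qed

lemma dd_annih:
  "(\<forall>z j. j < count (mset xs) z \<longrightarrow> D j z = 0) \<Longrightarrow> divdiff D xs = 0"
proof (induction D xs rule: divdiff.induct)
  case (1 D) then show ?case by simp
next
  case (2 D x0 xs)
  show ?case
  proof (cases "\<forall>y\<in>set xs. y = x0")
    case True
    then have "count (mset xs) x0 = length xs" by (induction xs) auto
    then have "count (mset (x0 # xs)) x0 = Suc (length xs)"
      by simp
    then have "D (length xs) x0 = 0" using 2(3) by auto
    then show ?thesis using True by (simp add: dd_all)
  next
    case False
    define y where "y = hd (filter (\<lambda>y. y \<noteq> x0) xs)"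
    have "count (mset xs) z \<le> count (mset (x0 # xs)) z" for z
      by simp
    then have h1: "divdiff D xs = 0"
      apply (intro 2(1)[OF False y_def])
      using 2(3) by (meson order_less_le_trans)
    have "count (mset (x0 # remove1 y xs)) z \<le> count (mset (x0 # xs)) z" for z
      by (simp add: mset_remove1)
    then have h2: "divdiff D (x0 # remove1 y xs) = 0"
      apply (intro 2(2)[OF False y_def])
      using 2(3) by (meson order_less_le_trans)
    show ?thesis using h1 h2 by (simp only: dd_step[OF False y_def]) simp
  qed
qed

definition dfam :: "real poly \<Rightarrow> nat \<Rightarrow> real \<Rightarrow> real" where
  "dfam p = (\<lambda>j t. poly ((pderiv ^^ j) p) t)"

definition om :: "real multiset \<Rightarrow> real poly" where
  "om Z = prod_mset (image_mset (\<lambda>w. [:-w,1:]) Z)"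

lemma pd_lin: "(pderiv ^^ j) (smult a p + smult b q) = smult a ((pderiv ^^ j) p) + smult b ((pderiv ^^ j) q)"
  by (induction j) (auto simp: pderiv_add pderiv_smult)

lemma dfam_lin: "dfam (smult a p + smult b q) = (\<lambda>j t. a * dfam p j t + b * dfam q j t)"
  by (auto simp: dfam_def pd_lin fun_eq_iff)

lemma om_empty[simp]: "om {#} = 1" by (simp add: om_def)
lemma om_add: "om (add_mset a Z) = [:-a,1:] * om Z" by (simp add: om_def)

lemma om_deg: "degree (om Z) = size Z \<and> coeff (om Z) (size Z) = 1"
proof (induction Z)
  case empty then show ?case by simp
next
  case (add x Z)
  have nz: "om Z \<noteq> 0" using add by auto
  have "degree ([:-x,1:] * om Z) = degree [:-x,1:] + degree (om Z)"
    by (rule degree_mult_eq) (use nz in simp_all)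
  then have d: "degree (om (add_mset x Z)) = size (add_mset x Z)"
    using add by (simp only: om_add) simp
  have "coeff (om (add_mset x Z)) (size (add_mset x Z)) = lead_coeff (om (add_mset x Z))"
    using d by simp
  also have "\<dots> = lead_coeff [:-x,1:] * lead_coeff (om Z)" by (simp only: om_add lead_coeff_mult)
  also have "\<dots> = 1" using add by simp
  finally show ?case using d by simp
qed

lemma pd_top: "degree p \<le> k \<Longrightarrow> (pderiv ^^ k) p = [:fact k * coeff p k:]"
proof (induction k arbitrary: p)
  case 0
  then show ?case using degree_0_id[of p] by simp
next
  case (Suc k)
  have "degree (pderiv p) \<le> k" using Suc.prems by (simp add: degree_pderiv)
  then have "(pderiv ^^ k) (pderiv p) = [:fact k * coeff (pderiv p) k:]" by (rule Suc.IH)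
  then show ?case by (simp add: funpow_Suc_right coeff_pderiv mult_ac del: funpow.simps)
qed

lemma powlem:
  fixes z :: real
  shows "j \<le> m \<Longrightarrow> \<exists>q'. (pderiv ^^ j) ([:-z,1:]^m * q) = [:-z,1:]^(m-j) * q' \<and> (poly q z \<noteq> 0 \<longrightarrow> poly q' z \<noteq> 0)"
proof (induction j)
  case 0 then show ?case by auto
next
  case (Suc j)
  then obtain q' where q': "(pderiv ^^ j) ([:-z,1:]^m * q) = [:-z,1:]^(m-j) * q'"
    "poly q z \<noteq> 0 \<longrightarrow> poly q' z \<noteq> 0" by auto
  define n where "n = m - Suc j"
  have mj: "m - j = Suc n" using Suc.prems n_def by simp
  have "(pderiv ^^ Suc j) ([:-z,1:]^m * q) = pderiv ([:-z,1:]^ Suc n * q')"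
    using q' mj by simp
  also have "\<dots> = [:-z,1:]^n * ([:-z,1:] * pderiv q' + smult (of_nat (Suc n)) q')"
    unfolding lemma_order_pderiv1
    by (simp only: distrib_left power_Suc mult.assoc mult_smult_right mult.commute[of q']) (metis mult.left_commute)
  finally have e: "(pderiv ^^ Suc j) ([:-z,1:]^m * q) = [:-z,1:]^(m - Suc j) * ([:-z,1:] * pderiv q' + smult (of_nat (Suc n)) q')"
    using n_def by simp
  have "poly ([:-z,1:] * pderiv q' + smult (of_nat (Suc n)) q') z = of_nat (Suc n) * poly q' z"
  proof -
    have h0: "poly [:-z,1:] z = 0" by simp
    show ?thesis by (simp only: poly_add poly_mult poly_smult h0 mult_zero_left add_0_left)
  qed
  then show ?case using q'(2) e by (intro exI[of _ "[:-z,1:] * pderiv q' + smult (of_nat (Suc n)) q'"]) simp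
qed

lemma om_split: "om Z = [:-z,1:] ^ count Z z * om (filter_mset (\<lambda>w. w \<noteq> z) Z)"
proof -
  have "Z = filter_mset (\<lambda>w. w = z) Z + filter_mset (\<lambda>w. w \<noteq> z) Z"
    using multiset_partition[of Z "\<lambda>w. w = z"] by simp
  also have "filter_mset (\<lambda>w. w = z) Z = replicate_mset (count Z z) z"
    by (simp add: filter_eq_replicate_mset)
  finally have "om Z = om (replicate_mset (count Z z) z + filter_mset (\<lambda>w. w \<noteq> z) Z)" by simp
  then show ?thesis by (simp add: om_def)
qed

lemma om_rest_nz: "poly (om (filter_mset (\<lambda>w. w \<noteq> z) Z)) z \<noteq> 0"
  by (auto simp: om_def poly_prod_mset prod_mset_zero_iff)

lemma om_van: "j < count Z z \<Longrightarrow> dfam (om Z) j z = 0"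
proof -
  assume j: "j < count Z z"
  obtain q' where "(pderiv ^^ j) (om Z) = [:-z,1:]^(count Z z - j) * q'"
    using powlem[of j "count Z z" z "om (filter_mset (\<lambda>w. w \<noteq> z) Z)"] j om_split[of Z z] by auto
  then show ?thesis using j by (simp add: dfam_def)
qed

lemma om_nvan: "dfam (om Z) (count Z z) z \<noteq> 0"
proof -
  obtain q' where "(pderiv ^^ count Z z) (om Z) = q'" "poly q' z \<noteq> 0"
    using powlem[of "count Z z" "count Z z" z "om (filter_mset (\<lambda>w. w \<noteq> z) Z)"] om_split[of Z z] om_rest_nz[of z Z] by auto
  then show ?thesis by (simp add: dfam_def)
qed

lemma herm: "\<exists>p. degree p \<le> size Z - 1 \<and> (\<forall>z j. j < count Z z \<longrightarrow> dfam p j z = D j z)"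
proof (induction Z)
  case empty
  then show ?case by (intro exI[of _ 0]) simp
next
  case (add x Z)
  then obtain p where p: "degree p \<le> size Z - 1" "\<forall>z j. j < count Z z \<longrightarrow> dfam p j z = D j z" by blast
  define \<mu> where "\<mu> = count Z x"
  define c where "c = (D \<mu> x - dfam p \<mu> x) / dfam (om Z) \<mu> x"
  define p' where "p' = smult 1 p + smult c (om Z)"
  have nz: "dfam (om Z) \<mu> x \<noteq> 0" unfolding \<mu>_def by (rule om_nvan)
  have df: "dfam p' = (\<lambda>j t. 1 * dfam p j t + c * dfam (om Z) j t)"
    unfolding p'_def by (rule dfam_lin)
  have "degree p' \<le> max (degree (smult 1 p)) (degree (smult c (om Z)))"
    unfolding p'_def by (rule degree_add_le_max)
  also have "\<dots> \<le> size Z" using p(1) om_deg[of Z] degree_smult_le[of c "om Z"] by auto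
  finally have dp: "degree p' \<le> size (add_mset x Z) - 1" by simp
  have "dfam p' j z = D j z" if j: "j < count (add_mset x Z) z" for j z
  proof (cases "j < count Z z")
    case True
    then show ?thesis using p(2) om_van[OF True] df by simp
  next
    case False
    then have "z = x" "j = \<mu>" using j \<mu>_def by (auto split: if_splits)
    then show ?thesis using df nz by (simp add: c_def)
  qed
  then show ?case using dp by blast
qed

lemma deg_drop: "degree (q::real poly) \<le> Suc n \<Longrightarrow> coeff q (Suc n) = 0 \<Longrightarrow> degree q \<le> n"
proof (cases "q = 0")
  case False
  assume a: "degree q \<le> Suc n" "coeff q (Suc n) = 0"
  have "coeff q (degree q) \<noteq> 0" using False by simp
  then have "degree q \<noteq> Suc n" using a(2) by metis
  then show ?thesis using a by simp
qed simp

lemma om_shift: "[:-a,1:] * X = [:-b,1:] * X + smult (b - a) (X::real poly)"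
  apply (subst poly_eq_poly_eq_iff[symmetric])
  by (auto simp: fun_eq_iff algebra_simps)

lemma dd_stepP:
  assumes PL: "\<forall>ys q. length ys = Suc (size C) \<longrightarrow> degree q \<le> size C \<longrightarrow> divdiff (dfam q) ys = coeff q (size C)"
    and A: "mset A = add_mset a C" and B: "mset B = add_mset b C" and dp: "degree p \<le> Suc (size C)"
  shows "divdiff (dfam p) B - divdiff (dfam p) A = coeff p (Suc (size C)) * (b - a)"
proof -
  define n where "n = size C"
  define c where "c = coeff p (Suc n)"
  define q where "q = smult 1 p + smult (-c) (om (add_mset a C))"
  have omA: "degree (om (add_mset a C)) = Suc n" "coeff (om (add_mset a C)) (Suc n) = 1"
    using om_deg[of "add_mset a C"] n_def by auto
  have "degree q \<le> max (degree (smult 1 p)) (degree (smult (-c) (om (add_mset a C))))"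
    unfolding q_def by (rule degree_add_le_max)
  also have "\<dots> \<le> Suc n" using dp omA n_def degree_smult_le[of "-c" "om (add_mset a C)"] by auto
  finally have "degree q \<le> Suc n" .
  moreover have "coeff q (Suc n) = 0" using omA by (simp add: q_def c_def)
  ultimately have dq: "degree q \<le> n" by (rule deg_drop)
  have pq: "p = smult 1 q + smult c (om (add_mset a C))" by (simp add: q_def)
  have lenA: "length A = Suc n" using A n_def by (metis size_add_mset size_mset)
  have lenB: "length B = Suc n" using B n_def by (metis size_add_mset size_mset)
  have qA: "divdiff (dfam q) A = coeff q n" using PL lenA dq n_def by auto
  have qB: "divdiff (dfam q) B = coeff q n" using PL lenB dq n_def by auto
  have oA: "divdiff (dfam (om (add_mset a C))) A = 0"
    by (rule dd_annih) (simp add: A om_van)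
  have e1: "om (add_mset a C) = smult 1 (om (add_mset b C)) + smult (b - a) (om C)"
    using om_shift[of a "om C" b] by (simp add: om_add)
  have oB0: "divdiff (dfam (om (add_mset b C))) B = 0"
    by (rule dd_annih) (simp add: B om_van)
  have oC: "divdiff (dfam (om C)) B = 1"
    using PL lenB om_deg[of C] n_def by auto
  have oB: "divdiff (dfam (om (add_mset a C))) B = b - a"
    unfolding e1 dfam_lin dd_lin oB0 oC by simp
  have "divdiff (dfam p) B - divdiff (dfam p) A = 
     (1 * divdiff (dfam q) B + c * divdiff (dfam (om (add_mset a C))) B) - (1 * divdiff (dfam q) A + c * divdiff (dfam (om (add_mset a C))) A)"
    by (subst (1 2) pq) (simp only: dfam_lin dd_lin)
  also have "\<dots> = c * (b - a)" using qA qB oA oB by simp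
  finally show ?thesis by (simp add: c_def n_def)
qed

lemma PL: "length ys = Suc k \<Longrightarrow> degree p \<le> k \<Longrightarrow> divdiff (dfam p) ys = coeff p k"
proof (induction k arbitrary: ys p)
  case 0
  then obtain z where ys: "ys = [z]" by (metis length_0_conv length_Suc_conv)
  have "divdiff (dfam p) ys = poly p z" by (simp add: ys dd_all dfam_def)
  have e: "p = [:coeff p 0:]" using degree_0_id[of p] 0(2) by simp
  have "poly p z = coeff p 0" by (subst e) simp
  then show ?case using \<open>divdiff (dfam p) ys = poly p z\<close> by simp
next
  case (Suc k)
  then obtain x0 xs where ys: "ys = x0 # xs" and lxs: "length xs = Suc k" by (metis length_Suc_conv)
  show ?case
  proof (cases "\<forall>y\<in>set xs. y = x0")
    case True
    then show ?thesis using pd_top[OF Suc.prems(2)] lxs by (simp add: ys dd_all dfam_def)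
  next
    case False
    define y where "y = hd (filter (\<lambda>y. y \<noteq> x0) xs)"
    have ne: "filter (\<lambda>y. y \<noteq> x0) xs \<noteq> []" using False by (auto simp: filter_empty_conv)
    have "y \<in> set (filter (\<lambda>y. y \<noteq> x0) xs)" using ne hd_in_set y_def by metis
    then have yin: "y \<in> set xs" "y \<noteq> x0" by auto
    define C where "C = mset (remove1 y xs)"
    have "size C = length (remove1 y xs)" by (simp only: C_def size_mset)
    then have sC: "size C = k" using lxs yin by (simp add: length_remove1)
    have mB: "mset xs = add_mset y C" using yin by (simp add: C_def)
    have mA: "mset (x0 # remove1 y xs) = add_mset x0 C" by (simp add: C_def)
    have PLk: "\<forall>ys q. length ys = Suc (size C) \<longrightarrow> degree q \<le> size C \<longrightarrow> divdiff (dfam q) ys = coeff q (size C)"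
      using Suc.IH sC by auto
    have "divdiff (dfam p) xs - divdiff (dfam p) (x0 # remove1 y xs) = coeff p (Suc k) * (y - x0)"
      using dd_stepP[OF PLk mA mB] Suc.prems(2) sC by simp
    then show ?thesis using dd_step[OF False y_def] yin by (simp add: ys)
  qed
qed

lemma rolle_step:
  fixes D :: "nat \<Rightarrow> real \<Rightarrow> real" and a b :: real
  assumes der: "\<forall>t\<in>{a..b}. (D 0 has_real_derivative D 1 t) (at t within {a..b})"
  shows "set_mset Z \<subseteq> {a..b} \<Longrightarrow> Z \<noteq> {#} \<Longrightarrow> (\<forall>z j. j < count Z z \<longrightarrow> D j z = 0) \<Longrightarrow>
    \<exists>Z'. size Z' + 1 = size Z \<and> set_mset Z' \<subseteq> {a..b} \<and> (\<forall>w\<in>#Z'. \<exists>z\<in>#Z. w \<le> z)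
      \<and> (\<forall>z\<in>#Z. count Z' z + 1 = count Z z) \<and> (\<forall>z\<in>#Z'. z \<notin># Z \<longrightarrow> count Z' z = 1 \<and> D 1 z = 0)"
proof (induction Z rule: multiset_induct_max)
  case empty
  then show ?case by simp
next
  case (add m M)
  note IH = add.IH and mx = add.hyps
  have sub: "set_mset M \<subseteq> {a..b}" and mab: "m \<in> {a..b}" using add.prems(1) by auto
  have vanM: "\<forall>z j. j < count M z \<longrightarrow> D j z = 0"
    using add.prems(3) by (metis count_add_mset less_SucI)
  show ?case
  proof (cases "M = {#}")
    case True
    then show ?thesis by (intro exI[of _ "{#}"]) auto
  next
    case Mne: False
    obtain M' where M': "size M' + 1 = size M" "set_mset M' \<subseteq> {a..b}" "\<forall>w\<in>#M'. \<exists>z\<in>#M. w \<le> z"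
      "\<forall>z\<in>#M. count M' z + 1 = count M z" "\<forall>z\<in>#M'. z \<notin># M \<longrightarrow> count M' z = 1 \<and> D 1 z = 0"
      using IH[OF sub Mne vanM] by blast
    show ?thesis
    proof (cases "m \<in># M")
      case True
      show ?thesis
      proof (intro exI[of _ "add_mset m M'"] conjI)
        show "size (add_mset m M') + 1 = size (add_mset m M)" using M'(1) by simp
        show "set_mset (add_mset m M') \<subseteq> {a..b}" using M'(2) mab by simp
        show "\<forall>w\<in>#add_mset m M'. \<exists>z\<in>#add_mset m M. w \<le> z" using M'(3) by auto
        show "\<forall>z\<in>#add_mset m M. count (add_mset m M') z + 1 = count (add_mset m M) z"
          using M'(4) True by auto
        show "\<forall>z\<in>#add_mset m M'. z \<notin># add_mset m M \<longrightarrow> count (add_mset m M') z = 1 \<and> D 1 z = 0"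
          using M'(5) by auto
      qed
    next
      case mM: False
      define m' where "m' = Max (set_mset M)"
      have m'M: "m' \<in># M" using Mne by (simp add: m'_def)
      have Mle: "\<forall>z\<in>#M. z \<le> m'" by (simp add: m'_def)
      have m'm: "m' < m" using mx m'M mM by (metis order_le_less)
      have m'ab: "m' \<in> {a..b}" using sub m'M by auto
      have z1: "D 0 m' = 0" using add.prems(3) m'M by auto
      have z2: "D 0 m = 0" using add.prems(3) by auto
      have cont: "continuous_on {a..b} (D 0)"
        using der by (intro DERIV_continuous_on) auto
      have cont': "continuous_on {m'..m} (D 0)"
        using continuous_on_subset[OF cont] m'ab mab by auto
      have dat: "(D 0 has_real_derivative D 1 x) (at x)" if "m' < x" "x < m" for x
      proof -
        have "a < x" "x < b" using that m'ab mab by auto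
        have "(D 0 has_real_derivative D 1 x) (at x within {a..b})"
          using der \<open>a < x\<close> \<open>x < b\<close> by auto
        then show ?thesis using at_within_Icc_at[OF \<open>a < x\<close> \<open>x < b\<close>] by simp
      qed
      obtain \<xi> where xi: "m' < \<xi>" "\<xi> < m" "(D 0 has_real_derivative 0) (at \<xi>)"
        using Rolle[OF m'm, of "D 0"] z1 z2 cont' dat by (metis real_differentiable_def)
      have D1xi: "D 1 \<xi> = 0" using DERIV_unique[OF dat[OF xi(1,2)] xi(3)] .
      have M'le: "\<forall>w\<in>#M'. w \<le> m'" using M'(3) Mle by fastforce
      have xiM': "\<xi> \<notin># M'" using M'le xi(1) by fastforce
      have mM': "m \<notin># M'" using M'le m'm by fastforce
      have xiM: "\<xi> \<notin># M" using Mle xi(1) by fastforce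
      show ?thesis
      proof (intro exI[of _ "add_mset \<xi> M'"] conjI)
        show "size (add_mset \<xi> M') + 1 = size (add_mset m M)" using M'(1) by simp
        show "set_mset (add_mset \<xi> M') \<subseteq> {a..b}" using M'(2) mab m'ab xi by auto
        show "\<forall>w\<in>#add_mset \<xi> M'. \<exists>z\<in>#add_mset m M. w \<le> z" using M'(3) xi by force
        show "\<forall>z\<in>#add_mset m M. count (add_mset \<xi> M') z + 1 = count (add_mset m M) z"
        proof
          fix z assume "z \<in># add_mset m M"
          then consider "z = m" | "z \<in># M" by auto
          then show "count (add_mset \<xi> M') z + 1 = count (add_mset m M) z"
          proof cases
            case 1 then show ?thesis using mM mM' xi(2) by (simp add: not_in_iff)
          next
            case 2
            then have "z \<noteq> \<xi>" "z \<noteq> m" using xiM mM by auto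
            then show ?thesis using M'(4) 2 by simp
          qed
        qed
        show "\<forall>z\<in>#add_mset \<xi> M'. z \<notin># add_mset m M \<longrightarrow> count (add_mset \<xi> M') z = 1 \<and> D 1 z = 0"
        proof (intro ballI impI)
          fix z assume z: "z \<in># add_mset \<xi> M'" "z \<notin># add_mset m M"
          show "count (add_mset \<xi> M') z = 1 \<and> D 1 z = 0"
          proof (cases "z = \<xi>")
            case True then show ?thesis using xiM' D1xi by (simp add: not_in_iff)
          next
            case False then show ?thesis using z M'(5) by auto
          qed
        qed
      qed
    qed
  qed
qed

lemma rolle_multi:
  fixes a b :: real
  shows "\<forall>D Z. size Z = Suc k \<longrightarrow> set_mset Z \<subseteq> {a..b} \<longrightarrow>
    (\<forall>j<k. \<forall>t\<in>{a..b}. (D j has_real_derivative D (Suc j) t) (at t within {a..b})) \<longrightarrow>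
    continuous_on {a..b} (D k) \<longrightarrow> (\<forall>z j. j < count Z z \<longrightarrow> D j z = 0) \<longrightarrow> (\<exists>\<xi>\<in>{a..b}. D k \<xi> = 0)"
proof (induction k)
  case 0
  show ?case
  proof (intro allI impI)
    fix D :: "nat \<Rightarrow> real \<Rightarrow> real" and Z :: "real multiset"
    assume h: "size Z = Suc 0" "set_mset Z \<subseteq> {a..b}" "\<forall>z j. j < count Z z \<longrightarrow> D j z = 0"
    then obtain z where "z \<in># Z" by (metis multiset_nonemptyE nat.distinct(1) size_empty)
    then have "0 < count Z z" by simp
    then have "D 0 z = 0" using h(3) by blast
    moreover have "z \<in> {a..b}" using h(2) \<open>z \<in># Z\<close> by auto
    ultimately show "\<exists>\<xi>\<in>{a..b}. D 0 \<xi> = 0" by blast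
  qed
next
  case (Suc k)
  show ?case
  proof (intro allI impI)
    fix D :: "nat \<Rightarrow> real \<Rightarrow> real" and Z :: "real multiset"
    assume h: "size Z = Suc (Suc k)" "set_mset Z \<subseteq> {a..b}"
      "\<forall>j<Suc k. \<forall>t\<in>{a..b}. (D j has_real_derivative D (Suc j) t) (at t within {a..b})"
      "continuous_on {a..b} (D (Suc k))" "\<forall>z j. j < count Z z \<longrightarrow> D j z = 0"
    have der0: "\<forall>t\<in>{a..b}. (D 0 has_real_derivative D 1 t) (at t within {a..b})" using h(3) by auto
    have "Z \<noteq> {#}" using h(1) by auto
    then obtain Z' where Z': "size Z' + 1 = size Z" "set_mset Z' \<subseteq> {a..b}"
      "\<forall>z\<in>#Z. count Z' z + 1 = count Z z" "\<forall>z\<in>#Z'. z \<notin># Z \<longrightarrow> count Z' z = 1 \<and> D 1 z = 0"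
      using rolle_step[OF der0 h(2) _ h(5)] by blast
    have van: "\<forall>z j. j < count Z' z \<longrightarrow> D (Suc j) z = 0"
    proof (intro allI impI)
      fix z j assume j: "j < count Z' z"
      show "D (Suc j) z = 0"
      proof (cases "z \<in># Z")
        case True
        then show ?thesis using Z'(3) j h(5) by (metis Suc_eq_plus1 Suc_less_eq)
      next
        case False
        have "z \<in># Z'" by (rule count_inI) (use j in simp)
        then show ?thesis using Z'(4) False j by auto
      qed
    qed
    have "\<exists>\<xi>\<in>{a..b}. D (Suc k) \<xi> = 0"
      using Suc.IH[rule_format, of Z' "\<lambda>j. D (Suc j)"] Z'(1,2) h(1,3,4) van by auto
    then show "\<exists>\<xi>\<in>{a..b}. D (Suc k) \<xi> = 0" .
  qed
qed

lemma mvt: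
  fixes a b :: real
  assumes der: "\<forall>j<k. \<forall>t\<in>{a..b}. (D j has_real_derivative D (Suc j) t) (at t within {a..b})"
    and cont: "continuous_on {a..b} (D k)" and len: "length xs = Suc k" and sub: "set xs \<subseteq> {a..b}"
  shows "\<exists>\<xi>\<in>{a..b}. divdiff D xs = D k \<xi> / fact k"
proof -
  obtain p where p: "degree p \<le> size (mset xs) - 1" "\<forall>z j. j < count (mset xs) z \<longrightarrow> dfam p j z = D j z"
    using herm by blast
  have dp: "degree p \<le> k" using p(1) len by simp
  define E where "E = (\<lambda>j t. 1 * D j t + (-1) * dfam p j t)"
  have "divdiff E xs = 1 * divdiff D xs + (-1) * divdiff (dfam p) xs" unfolding E_def by (rule dd_lin)
  moreover have "divdiff E xs = 0" by (rule dd_annih) (use p(2) in \<open>simp add: E_def\<close>)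
  moreover have "divdiff (dfam p) xs = coeff p k" using PL[OF len dp] .
  ultimately have dd: "divdiff D xs = coeff p k" by simp
  have pd: "(dfam p j has_real_derivative dfam p (Suc j) t) (at t within {a..b})" for j t
    unfolding dfam_def by (auto intro: has_field_derivative_at_within poly_DERIV)
  have derE: "\<forall>j<k. \<forall>t\<in>{a..b}. (E j has_real_derivative E (Suc j) t) (at t within {a..b})"
    unfolding E_def using der pd by (auto intro!: derivative_eq_intros)
  have cp: "continuous_on {a..b} (dfam p k)"
    by (rule DERIV_continuous_on) (rule pd)
  have contE: "continuous_on {a..b} (E k)"
    unfolding E_def using cont cp by (auto intro!: continuous_intros)
  have "\<exists>\<xi>\<in>{a..b}. E k \<xi> = 0"
    using rolle_multi[rule_format, where k=k and a=a and b=b and D=E and Z="mset xs"] len sub derE contE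
    by (auto simp: E_def p(2))
  then obtain \<xi> where xi: "\<xi> \<in> {a..b}" "E k \<xi> = 0" by blast
  have "dfam p k \<xi> = fact k * coeff p k" using pd_top[OF dp] by (simp add: dfam_def)
  then have "D k \<xi> = fact k * coeff p k" using xi(2) by (simp add: E_def)
  then have "divdiff D xs = D k \<xi> / fact k" using dd by simp
  then show ?thesis using xi(1) by blast
qed

lemma Delta1: "Delta 1 u g a b x = (if a \<le> x - u/2 \<and> x + u/2 \<le> b then g (x + u/2) - g (x - u/2) else 0)"
  by (simp add: Delta_def)

lemma powi_m2: "(u::real) powi (-2) = 1 / u^2"
  by (simp add: power_int_def inverse_eq_divide power_divide)

lemma om_bdd:
  fixes g :: "real \<Rightarrow> real"
  assumes cont: "continuous_on {a..b} g"
  shows "bdd_above (insert 0 {\<bar>Delta 1 u g a b x\<bar> | u x. 0 < u \<and> u \<le> t \<and> x \<in> {a..b}})"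
proof -
  have "bounded (g ` {a..b})" by (rule compact_imp_bounded[OF compact_continuous_image[OF cont compact_Icc]])
  then obtain M where M: "\<forall>s\<in>{a..b}. \<bar>g s\<bar> \<le> M" by (auto simp: bounded_iff)
  have "\<bar>Delta 1 u g a b x\<bar> \<le> 2 * M" if "a \<le> b" "x \<in> {a..b}" "0 < u" for u x
  proof (cases "a \<le> x - u/2 \<and> x + u/2 \<le> b")
    case True
    then have "\<bar>g (x + u/2)\<bar> \<le> M" "\<bar>g (x - u/2)\<bar> \<le> M" using M that by auto
    then show ?thesis using True unfolding Delta1 by simp
  next
    case False
    have "0 \<le> M" using M that(2) by (meson abs_ge_zero order_trans)
    have "Delta 1 u g a b x = 0" unfolding Delta1 using False by (simp only: if_False)
    then show ?thesis using \<open>0 \<le> M\<close> by simp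
  qed
  then show ?thesis
    by (intro bdd_aboveI[of _ "max 0 (2 * M)"]) fastforce
qed

lemma om_nonneg:
  assumes "continuous_on {a..b} g"
  shows "0 \<le> omega 1 g t a b"
  unfolding omega_def by (rule cSup_upper[OF _ om_bdd[OF assms]]) simp

lemma om_ge:
  fixes g :: "real \<Rightarrow> real"
  assumes cont: "continuous_on {a..b} g" and s: "s \<in> {a..b}" and t: "t \<in> {a..b}"
  shows "\<bar>g t - g s\<bar> \<le> omega 1 g (b - a) a b"
proof -
  have key: "\<bar>g t' - g s'\<bar> \<le> omega 1 g (b - a) a b" if "s' \<in> {a..b}" "t' \<in> {a..b}" "s' < t'" for s' t'
  proof -
    define u where "u = t' - s'"
    define xm where "xm = (s' + t') / 2"
    have "xm - u/2 = s'" "xm + u/2 = t'" by (auto simp: u_def xm_def field_simps)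
    then have "Delta 1 u g a b xm = g t' - g s'" using that unfolding Delta1 by simp
    moreover have "0 < u" "u \<le> b - a" "xm \<in> {a..b}" using that by (auto simp: u_def xm_def)
    ultimately have "\<exists>uu xx. \<bar>g t' - g s'\<bar> = \<bar>Delta 1 uu g a b xx\<bar> \<and> 0 < uu \<and> uu \<le> b - a \<and> xx \<in> {a..b}"
      by metis
    then have "\<bar>g t' - g s'\<bar> \<in> {\<bar>Delta 1 u g a b x\<bar> | u x. 0 < u \<and> u \<le> b - a \<and> x \<in> {a..b}}"
      by blast
    then have "\<bar>g t' - g s'\<bar> \<in> insert 0 {\<bar>Delta 1 u g a b x\<bar> | u x. 0 < u \<and> u \<le> b - a \<and> x \<in> {a..b}}"
      by (rule insertI2)
    then show ?thesis unfolding omega_def by (rule cSup_upper[OF _ om_bdd[OF cont]])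
  qed
  consider "s = t" | "s < t" | "t < s" by linarith
  then show ?thesis
  proof cases
    case 1 then show ?thesis using om_nonneg[OF cont] by simp
  next
    case 2 then show ?thesis using key s t by blast
  next
    case 3 then show ?thesis using key[of t s] s t by (simp add: abs_minus_commute)
  qed
qed

lemma om_const:
  fixes g :: "real \<Rightarrow> real"
  assumes "b - a \<le> v"
  shows "omega 1 g v a b = omega 1 g (b - a) a b"
proof -
  have "insert 0 {\<bar>Delta 1 u g a b x\<bar> | u x. 0 < u \<and> u \<le> v \<and> x \<in> {a..b}} =
        insert 0 {\<bar>Delta 1 u g a b x\<bar> | u x. 0 < u \<and> u \<le> b - a \<and> x \<in> {a..b}}" (is "?A = ?B")
  proof
    show "?A \<subseteq> ?B"
    proof
      fix y assume "y \<in> ?A"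
      then consider "y = 0" | u x where "y = \<bar>Delta 1 u g a b x\<bar>" "0 < u" "u \<le> v" "x \<in> {a..b}" by blast
      then show "y \<in> ?B"
      proof cases
        case 1 then show ?thesis by simp
      next
        case 2
        show ?thesis
        proof (cases "u \<le> b - a")
          case True then show ?thesis using 2 by blast
        next
          case False
          then have "Delta 1 u g a b x = 0" unfolding Delta1 by auto
          then show ?thesis using 2 by simp
        qed
      qed
    qed
    show "?B \<subseteq> ?A" using assms by force
  qed
  then show ?thesis unfolding omega_def by simp
qed

lemma integ:
  fixes L W :: real
  assumes "0 < L"
  shows "integral {L..2*L} (\<lambda>u. u powi (-2) * W) = W / (2 * L)"
proof -
  have "((\<lambda>u. u powi (-2) * W) has_integral ((\<lambda>u. - W / u) (2*L) - (\<lambda>u. - W / u) L)) {L..2*L}"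
  proof (rule fundamental_theorem_of_calculus)
    show "L \<le> 2 * L" using assms by simp
    fix u assume u: "u \<in> {L..2*L}"
    then have "0 < u" using assms by auto
    have "((\<lambda>u. - W / u) has_real_derivative u powi (-2) * W) (at u)"
      using \<open>0 < u\<close> by (auto intro!: derivative_eq_intros simp: powi_m2 power2_eq_square field_simps)
    then show "((\<lambda>u. - W / u) has_vector_derivative u powi (-2) * W) (at u within {L..2*L})"
      by (simp add: has_real_derivative_iff_has_vector_derivative has_vector_derivative_at_within)
  qed
  then have "integral {L..2*L} (\<lambda>u. u powi (-2) * W) = - W / (2*L) - - W / L" by (rule integral_unique)
  also have "\<dots> = W / (2 * L)" using assms by (simp add: field_simps)
  finally show ?thesis .
qed

lemma Lambda_eq:
  fixes x :: "nat \<Rightarrow> real"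
  shows "Lambda r x (r + 1) \<phi> = integral {x (r+1) - x 0 .. 2 * (x (r+1) - x 0)} (\<lambda>u. u powi (-2) * \<phi> u)"
proof -
  have set: "{Lambda_pqr p q r x (r+1) \<phi> | p q. p \<le> r+1 \<and> q \<le> r+1 \<and> p + r + 1 \<le> q} = {Lambda_pqr 0 (r+1) r x (r+1) \<phi>}"
  proof
    show "{Lambda_pqr p q r x (r+1) \<phi> | p q. p \<le> r+1 \<and> q \<le> r+1 \<and> p + r + 1 \<le> q} \<subseteq> {Lambda_pqr 0 (r+1) r x (r+1) \<phi>}"
    proof
      fix y assume "y \<in> {Lambda_pqr p q r x (r+1) \<phi> | p q. p \<le> r+1 \<and> q \<le> r+1 \<and> p + r + 1 \<le> q}"
      then obtain p q where "y = Lambda_pqr p q r x (r+1) \<phi>" "p \<le> r+1" "q \<le> r+1" "p + r + 1 \<le> q" by blast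
      then have "p = 0" "q = r + 1" by auto
      then show "y \<in> {Lambda_pqr 0 (r+1) r x (r+1) \<phi>}" using \<open>y = _\<close> by simp
    qed
    have "\<exists>p q. Lambda_pqr 0 (r+1) r x (r+1) \<phi> = Lambda_pqr p q r x (r+1) \<phi> \<and> p \<le> r+1 \<and> q \<le> r+1 \<and> p + r + 1 \<le> q"
      by (intro exI[of _ 0] exI[of _ "r+1"]) simp
    then show "{Lambda_pqr 0 (r+1) r x (r+1) \<phi>} \<subseteq> {Lambda_pqr p q r x (r+1) \<phi> | p q. p \<le> r+1 \<and> q \<le> r+1 \<and> p + r + 1 \<le> q}"
      by blast
  qed
  have dpq: "dpq x (r+1) 0 (r+1) = 2 * (x (r+1) - x 0)"
    by (simp add: dpq_def yext_def)
  have ex: "int 0 + int r - int (r+1) - 1 = -2" by simp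
  have "Lambda r x (r + 1) \<phi> = Lambda_pqr 0 (r+1) r x (r+1) \<phi>" unfolding Lambda_def set by simp
  also have "\<dots> = integral {x (r+1) - x 0 .. 2 * (x (r+1) - x 0)} (\<lambda>u. u powi (-2) * \<phi> u)"
    unfolding Lambda_pqr_def dpq ex by simp
  finally show ?thesis .
qed

theorem lemma3p1:
  fixes r :: nat
  shows "\<exists>c::real. \<forall>(x :: nat \<Rightarrow> real) (f :: real \<Rightarrow> real) (D :: nat \<Rightarrow> real \<Rightarrow> real).
     (\<forall>i<r + 1. x i \<le> x (Suc i)) \<longrightarrow> x 0 < x (r + 1) \<longrightarrow>
     (\<forall>t\<in>{x 0..x (r + 1)}. D 0 t = f t) \<longrightarrow>
     (\<forall>k<r. \<forall>t\<in>{x 0..x (r + 1)}.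
        (D k has_real_derivative D (Suc k) t) (at t within {x 0..x (r + 1)})) \<longrightarrow>
     continuous_on {x 0..x (r + 1)} (D r) \<longrightarrow>
     \<bar>divdiff D (map x [0..<r + 2])\<bar>
       \<le> c * Lambda r x (r + 1) (\<lambda>t. omega 1 (D r) t (x 0) (x (r + 1)))"
proof (intro exI[of _ "2::real"] allI impI)
  fix x :: "nat \<Rightarrow> real" and f :: "real \<Rightarrow> real" and D :: "nat \<Rightarrow> real \<Rightarrow> real"
  assume mono: "\<forall>i<r + 1. x i \<le> x (Suc i)" and lt: "x 0 < x (r + 1)"
    and der: "\<forall>k<r. \<forall>t\<in>{x 0..x (r + 1)}. (D k has_real_derivative D (Suc k) t) (at t within {x 0..x (r + 1)})"
    and cont: "continuous_on {x 0..x (r + 1)} (D r)"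
  have mono2: "i \<le> j \<Longrightarrow> j \<le> r+1 \<Longrightarrow> x i \<le> x j" for i j
  proof (induction j)
    case 0 then show ?case by simp
  next
    case (Suc j)
    show ?case
    proof (cases "i = Suc j")
      case True then show ?thesis by simp
    next
      case False
      then have "x i \<le> x j" using Suc by simp
      also have "x j \<le> x (Suc j)" using mono Suc.prems by simp
      finally show ?thesis .
    qed
  qed
  have xin: "i \<le> r+1 \<Longrightarrow> x i \<in> {x 0..x (r+1)}" for i using mono2[of 0 i] mono2[of i "r+1"] by auto
  define L where "L = x (r+1) - x 0"
  have L0: "0 < L" using lt by (simp add: L_def)
  define zs where "zs = map x [0..<r+2]"
  define A' where "A' = map x [0..<r+1]"
  define B' where "B' = map x [1..<r+2]"
  define C where "C = mset (map x [1..<r+1])"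
  have u1: "[0..<r+2] = [0..<r+1] @ [r+1]" by (simp add: numeral_2_eq_2)
  have u2: "[0..<r+2] = 0 # [1..<r+2]" by (simp add: upt_rec)
  have u3: "[0..<r+1] = 0 # [1..<r+1]" by (simp add: upt_rec)
  have u4: "[1..<r+2] = [1..<r+1] @ [r+1]" by (simp add: numeral_2_eq_2)
  have zsA: "zs = A' @ [x (r+1)]" unfolding zs_def A'_def u1 by simp
  have zsB: "zs = x 0 # B'" unfolding zs_def B'_def u2 by simp
  have mA: "mset A' = add_mset (x 0) C" unfolding A'_def C_def u3 by simp
  have mB: "mset B' = add_mset (x (r+1)) C" unfolding B'_def C_def u4 by simp
  have sC: "size C = r" by (simp add: C_def)
  have lzs: "length zs = Suc (r+1)" by (simp add: zs_def)
  have lA: "length A' = Suc r" by (simp add: A'_def)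
  have lB: "length B' = Suc r" by (simp add: B'_def)
  have sA: "set A' \<subseteq> {x 0..x (r+1)}" using xin by (auto simp: A'_def)
  have sB: "set B' \<subseteq> {x 0..x (r+1)}" using xin by (auto simp: B'_def)
  obtain p where p: "degree p \<le> size (mset zs) - 1" "\<forall>z j. j < count (mset zs) z \<longrightarrow> dfam p j z = D j z"
    using herm by blast
  have dp: "degree p \<le> r + 1" using p(1) lzs by simp
  define G where "G = (\<lambda>j t. 1 * D j t + (-1) * dfam p j t)"
  have ddX: "divdiff D ys = divdiff (dfam p) ys" if cnt: "\<forall>z. count (mset ys) z \<le> count (mset zs) z" for ys
  proof -
    have "divdiff G ys = 1 * divdiff D ys + (-1) * divdiff (dfam p) ys" unfolding G_def by (rule dd_lin)
    moreover have "divdiff G ys = 0"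
    proof (rule dd_annih, intro allI impI)
      fix z j assume "j < count (mset ys) z"
      then have "j < count (mset zs) z" using cnt by (meson order_less_le_trans)
      then show "G j z = 0" using p(2) by (simp add: G_def)
    qed
    ultimately show ?thesis by simp
  qed
  have main: "divdiff D zs = coeff p (r+1)"
    using ddX[of zs] PL[OF lzs dp] by simp
  have PLC: "\<forall>ys q. length ys = Suc (size C) \<longrightarrow> degree q \<le> size C \<longrightarrow> divdiff (dfam q) ys = coeff q (size C)"
    using PL by blast
  have stp: "divdiff (dfam p) B' - divdiff (dfam p) A' = coeff p (Suc r) * (x (r+1) - x 0)"
    using dd_stepP[OF PLC mA mB] dp sC by simp
  have eA: "divdiff D A' = divdiff (dfam p) A'" by (rule ddX) (simp add: zsA)
  have eB: "divdiff D B' = divdiff (dfam p) B'" by (rule ddX) (simp add: zsB)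
  obtain \<xi>A where xA: "\<xi>A \<in> {x 0..x (r+1)}" "divdiff D A' = D r \<xi>A / fact r"
    using mvt[OF der cont lA sA] by blast
  obtain \<xi>B where xB: "\<xi>B \<in> {x 0..x (r+1)}" "divdiff D B' = D r \<xi>B / fact r"
    using mvt[OF der cont lB sB] by blast
  have cf: "coeff p (r+1) * L = (D r \<xi>B - D r \<xi>A) / fact r"
    using stp eA eB xA xB by (simp add: L_def diff_divide_distrib)
  define W where "W = omega 1 (D r) (x (r+1) - x 0) (x 0) (x (r+1))"
  have W0: "0 \<le> W" unfolding W_def by (rule om_nonneg[OF cont])
  have dW: "\<bar>D r \<xi>B - D r \<xi>A\<bar> \<le> W" unfolding W_def by (rule om_ge[OF cont xA(1) xB(1)])
  have fr: "1 \<le> (fact r :: real)" by simp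
  have e: "coeff p (r+1) = (D r \<xi>B - D r \<xi>A) / (fact r * L)"
    using cf L0 by (simp add: field_simps)
  have e2: "divdiff D (map x [0..<r + 2]) = (D r \<xi>B - D r \<xi>A) / (fact r * L)"
    using main e unfolding zs_def by simp
  have "\<bar>divdiff D (map x [0..<r + 2])\<bar> = \<bar>D r \<xi>B - D r \<xi>A\<bar> / (fact r * L)"
    unfolding e2 using L0 by (simp add: abs_divide abs_mult)
  also have "\<dots> \<le> W / (fact r * L)"
    using dW L0 by (simp add: divide_right_mono)
  also have "\<dots> \<le> W / L"
    using W0 L0 fr by (simp add: frac_le)
  also have "\<dots> = 2 * (W / (2 * L))" using L0 by simp
  also have "W / (2 * L) = integral {L..2*L} (\<lambda>u. u powi (-2) * W)"
    using integ[OF L0] by simp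
  also have "\<dots> = integral {L..2*L} (\<lambda>u. u powi (-2) * omega 1 (D r) u (x 0) (x (r + 1)))"
  proof (rule integral_cong)
    fix u assume "u \<in> {L..2*L}"
    then have uL: "x (r+1) - x 0 \<le> u" by (simp add: L_def)
    then show "u powi (-2) * W = u powi (-2) * omega 1 (D r) u (x 0) (x (r + 1))"
      unfolding W_def by (simp only: om_const[OF uL])
  qed
  also have "\<dots> = Lambda r x (r + 1) (\<lambda>t. omega 1 (D r) t (x 0) (x (r + 1)))"
    using Lambda_eq[of r x] by (simp add: L_def)
  finally show "\<bar>divdiff D (map x [0..<r + 2])\<bar> \<le> 2 * Lambda r x (r + 1) (\<lambda>t. omega 1 (D r) t (x 0) (x (r + 1)))" .
qed

end
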